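(* Let $\Gamma_F\subset\mathbb R^4_{\ge0}$ be the Newton polyhedron of the set $$\{(21,0,0,0),(0,21,0,0),(0,0,5,0),(0,0,0,5),(0,2,1,0),(2,0,0,1),(1,1,1,0),(1,1,0,1)\},$$ and let $\Gamma_G$ be the Newton polyhedron of this set together with $W=(10,10,0,0)$. Then $\Gamma_F\subsetneq\Gamma_G$ and $\nu(\Gamma_F)=\nu(\Gamma_G)$.
   Context: The Newton polyhedron of a finite $\mathbf S\subset\mathbb Z^4_{\ge0}$ is $\mathrm{Conv}\bigcup_{a\in\mathbf S}(a+\mathbb R^4_{\ge0})$. For a convenient Newton polyhedron $\Gamma\subset\mathbb R^n_{\ge0}$, the Newton number is $$\nu(\Gamma)=\sum_{\emptyset\ne J\subseteq\{1..n\}}(-1)^{n-|J|}|J|!\,\mathrm{Vol}_{|J|}(\mathbb R^J_{\ge0}\setminus\Gamma)+(-1)^n,$$ where $\mathbb R^J$ is spanned by $e_j$, $j\in J$. *)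

theory Defs
  imports "HOL-Analysis.Analysis"
begin

definition newton_polyhedron :: "(real^'n) set \<Rightarrow> (real^'n) set" where
  "newton_polyhedron S = convex hull (\<Union>a\<in>S. {a + y | y. \<forall>i. 0 \<le> y $ i})"

text \<open>The |J|-dimensional volume of R^J_{>=0} minus Gamma, where R^J is the coordinate
subspace spanned by the e_j, j in J; it is identified with the functions J -> R
carrying the product Lebesgue measure, and a point x is embedded into R^n by
putting zeros in the coordinates outside J.\<close>
definition coord_vol :: "(real^'n) set \<Rightarrow> 'n set \<Rightarrow> real" where
  "coord_vol \<Gamma> J = measure (PiM J (\<lambda>_. lborel))
     {x \<in> PiE J (\<lambda>_. UNIV). (\<forall>j\<in>J. 0 \<le> x j) \<and>
        (\<chi> i. if i \<in> J then x i else 0) \<notin> \<Gamma>}"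

definition newton_number :: "(real^'n) set \<Rightarrow> real" where
  "newton_number \<Gamma> =
     (\<Sum>J\<in>{J. J \<noteq> {}}. (-1) ^ (CARD('n) - card J) * fact (card J) * coord_vol \<Gamma> J)
     + (-1) ^ CARD('n)"

definition S_F :: "(real^4) set" where
  "S_F = {vector [21,0,0,0], vector [0,21,0,0], vector [0,0,5,0], vector [0,0,0,5],
          vector [0,2,1,0], vector [2,0,0,1], vector [1,1,1,0], vector [1,1,0,1]}"

definition W_pt :: "real^4" where
  "W_pt = vector [10,10,0,0]"

end

theory Submission
  imports Defs
begin


definition hf :: "real \<Rightarrow> real \<Rightarrow> real \<Rightarrow> real \<Rightarrow> bool" where
  "hf a b c d \<longleftrightarrow> 0 \<le> a \<and> 0 \<le> b \<and> 0 \<le> c \<and> 0 \<le> d \<and> 21 \<le> a + b + 19*c + 19*d \<and>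
     5 \<le> 2*a + 2*b + c + d \<and> 105 \<le> 5*a + 79*b + 21*c + 95*d \<and> 105 \<le> 79*a + 5*b + 95*c + 21*d"

definition hg :: "real \<Rightarrow> real \<Rightarrow> real \<Rightarrow> real \<Rightarrow> bool" where
  "hg a b c d \<longleftrightarrow> 0 \<le> a \<and> 0 \<le> b \<and> 0 \<le> c \<and> 0 \<le> d \<and> 20 \<le> a + b + 18*c + 18*d \<and>
     5 \<le> 2*a + 2*b + c + d \<and> 105 \<le> 5*a + 79*b + 21*c + 95*d \<and> 105 \<le> 79*a + 5*b + 95*c + 21*d \<and>
     210 \<le> 10*a + 11*b + 189*c + 190*d \<and> 210 \<le> 11*a + 10*b + 190*c + 189*d"

lemma vector4_nth [simp]:
  "(vector [a,b,c,d] :: real^4) $ 1 = a" "(vector [a,b,c,d] :: real^4) $ 2 = b"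
  "(vector [a,b,c,d] :: real^4) $ 3 = c" "(vector [a,b,c,d] :: real^4) $ 4 = d"
  by (simp_all add: vector_def)

lemma vec4_eq: "(x::real^4) = y \<longleftrightarrow> x$1 = y$1 \<and> x$2 = y$2 \<and> x$3 = y$3 \<and> x$4 = y$4"
  by (simp add: vec_eq_iff forall_4)

definition "vA = (vector [21,0,0,0] :: real^4)"
definition "vB = (vector [0,21,0,0] :: real^4)"
definition "vP1 = (vector [0,0,5,0] :: real^4)"
definition "vP2 = (vector [0,0,0,5] :: real^4)"
definition "vC = (vector [0,2,1,0] :: real^4)"
definition "vD = (vector [2,0,0,1] :: real^4)"
definition "vE = (vector [1,1,1,0] :: real^4)"
definition "vF = (vector [1,1,0,1] :: real^4)"
lemmas V_defs = vA_def vB_def vP1_def vP2_def vC_def vD_def vE_def vF_def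

lemma SF_eq: "S_F = {vA, vB, vP1, vP2, vC, vD, vE, vF}"
  by (simp add: S_F_def V_defs)

lemma vA_in: "vA \<in> convex hull S_F" and vB_in: "vB \<in> convex hull S_F"
  and vP1_in: "vP1 \<in> convex hull S_F" and vP2_in: "vP2 \<in> convex hull S_F"
  and vC_in: "vC \<in> convex hull S_F" and vD_in: "vD \<in> convex hull S_F"
  and vE_in: "vE \<in> convex hull S_F" and vF_in: "vF \<in> convex hull S_F"
  by (auto intro!: hull_inc simp: SF_eq)

lemma conv4:
  assumes "convex C" "a \<in> C" "b \<in> C" "c \<in> C" "d \<in> C"
    "0 \<le> ua" "0 \<le> ub" "0 \<le> uc" "0 \<le> ud" "ua + ub + uc + ud = 1"
  shows "ua *\<^sub>R a + ub *\<^sub>R b + uc *\<^sub>R c + ud *\<^sub>R d \<in> C"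
proof -
  have "(\<Sum>i\<in>{0::nat,1,2,3}. ([ua,ub,uc,ud]!i) *\<^sub>R ([a,b,c,d]!i)) \<in> C"
    using assms by (intro convex_sum) (auto simp: add.assoc)
  then show ?thesis by (simp add: add.assoc)
qed

lemma conv4_hull:
  assumes "a \<in> convex hull S" "b \<in> convex hull S" "c \<in> convex hull S" "d \<in> convex hull S"
    "0 \<le> ua" "0 \<le> ub" "0 \<le> uc" "0 \<le> ud" "ua + ub + uc + ud = 1"
  shows "ua *\<^sub>R a + ub *\<^sub>R b + uc *\<^sub>R c + ud *\<^sub>R d \<in> convex hull S"
  using conv4[OF convex_convex_hull assms] .

lemma sig1:
  assumes h0: "hf (q$1) (q$2) (q$3) (q$4)" and e: "q$1 + q$2 + 19*q$3 + 19*q$4 = 21"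
  shows "q \<in> convex hull S_F"
proof -
  have h: "0 \<le> q$1" "0 \<le> q$2" "0 \<le> q$3" "0 \<le> q$4" "21 \<le> q$1 + q$2 + 19*q$3 + 19*q$4"
    "5 \<le> 2*q$1 + 2*q$2 + q$3 + q$4" "105 \<le> 5*q$1 + 79*q$2 + 21*q$3 + 95*q$4"
    "105 \<le> 79*q$1 + 5*q$2 + 95*q$3 + 21*q$4" using h0 by (simp_all add: hf_def)
  show ?thesis
  proof (cases "q$2 \<ge> 2*q$3 + q$4")
    case True
    note c = True
    have eq: "q = (1 - q$2/21 - 19*q$3/21 - 20*q$4/21) *\<^sub>R vA + (q$4) *\<^sub>R vF + (q$3) *\<^sub>R vC + (q$2/21 - 2*q$3/21 - q$4/21) *\<^sub>R vB"
      using e by (simp add: vec4_eq V_defs algebra_simps)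
    have "(1 - q$2/21 - 19*q$3/21 - 20*q$4/21) *\<^sub>R vA + (q$4) *\<^sub>R vF + (q$3) *\<^sub>R vC + (q$2/21 - 2*q$3/21 - q$4/21) *\<^sub>R vB \<in> convex hull S_F"
      by (rule conv4_hull[OF vA_in vF_in vC_in vB_in]) (use h c e in linarith)+
    then show ?thesis using eq by simp
  next
    case False
    note c0 = False
    show ?thesis
    proof (cases "q$2 \<ge> 2*q$3")
      case True
      note c = True c0
      have eq: "q = (1 - q$3 - q$4) *\<^sub>R vA + (- q$2 + 2*q$3 + q$4) *\<^sub>R vD + (q$2 - 2*q$3) *\<^sub>R vF + (q$3) *\<^sub>R vC"
        using e by (simp add: vec4_eq V_defs algebra_simps)
      have "(1 - q$3 - q$4) *\<^sub>R vA + (- q$2 + 2*q$3 + q$4) *\<^sub>R vD + (q$2 - 2*q$3) *\<^sub>R vF + (q$3) *\<^sub>R vC \<in> convex hull S_F"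
        by (rule conv4_hull[OF vA_in vD_in vF_in vC_in]) (use h c e in linarith)+
      then show ?thesis using eq by simp
    next
      case False
      note c = False c0
      have eq: "q = (1 - q$3 - q$4) *\<^sub>R vA + (q$4) *\<^sub>R vD + (q$2 - q$3) *\<^sub>R vC + (- q$2 + 2*q$3) *\<^sub>R vE"
        using e by (simp add: vec4_eq V_defs algebra_simps)
      have "(1 - q$3 - q$4) *\<^sub>R vA + (q$4) *\<^sub>R vD + (q$2 - q$3) *\<^sub>R vC + (- q$2 + 2*q$3) *\<^sub>R vE \<in> convex hull S_F"
        by (rule conv4_hull[OF vA_in vD_in vC_in vE_in]) (use h c e in linarith)+
      then show ?thesis using eq by simp
    qed
  qed
qed

lemma sig2:
  assumes h0: "hf (q$1) (q$2) (q$3) (q$4)" and e: "2*q$1 + 2*q$2 + q$3 + q$4 = 5"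
  shows "q \<in> convex hull S_F"
proof -
  have h: "0 \<le> q$1" "0 \<le> q$2" "0 \<le> q$3" "0 \<le> q$4" "21 \<le> q$1 + q$2 + 19*q$3 + 19*q$4"
    "5 \<le> 2*q$1 + 2*q$2 + q$3 + q$4" "105 \<le> 5*q$1 + 79*q$2 + 21*q$3 + 95*q$4"
    "105 \<le> 79*q$1 + 5*q$2 + 95*q$3 + 21*q$4" using h0 by (simp_all add: hf_def)
  show ?thesis
  proof (cases "q$1 \<ge> q$2")
    case True
    note c0 = True
    show ?thesis
    proof (cases "q$3 \<ge> q$2")
      case True
      note c = True c0
      have eq: "q = (1 - q$1/2 - 3*q$2/10 - q$3/5) *\<^sub>R vP2 + (q$1/2 - q$2/2) *\<^sub>R vD + (q$2) *\<^sub>R vE + (- q$2/5 + q$3/5) *\<^sub>R vP1"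
        using e by (simp add: vec4_eq V_defs algebra_simps)
      have "(1 - q$1/2 - 3*q$2/10 - q$3/5) *\<^sub>R vP2 + (q$1/2 - q$2/2) *\<^sub>R vD + (q$2) *\<^sub>R vE + (- q$2/5 + q$3/5) *\<^sub>R vP1 \<in> convex hull S_F"
        by (rule conv4_hull[OF vP2_in vD_in vE_in vP1_in]) (use h c e in linarith)+
      then show ?thesis using eq by simp
    next
      case False
      note c = False c0
      have eq: "q = (1 - q$1/2 - q$2/2) *\<^sub>R vP2 + (q$1/2 - q$2/2) *\<^sub>R vD + (q$3) *\<^sub>R vE + (q$2 - q$3) *\<^sub>R vF"
        using e by (simp add: vec4_eq V_defs algebra_simps)
      have "(1 - q$1/2 - q$2/2) *\<^sub>R vP2 + (q$1/2 - q$2/2) *\<^sub>R vD + (q$3) *\<^sub>R vE + (q$2 - q$3) *\<^sub>R vF \<in> convex hull S_F"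
        by (rule conv4_hull[OF vP2_in vD_in vE_in vF_in]) (use h c e in linarith)+
      then show ?thesis using eq by simp
    qed
  next
    case False
    note c0 = False
    show ?thesis
    proof (cases "2*q$3 \<ge> q$1 + q$2")
      case True
      note c = True c0
      have eq: "q = (1 - 2*q$1/5 - 2*q$2/5 - q$3/5) *\<^sub>R vP2 + (- q$1/2 + q$2/2) *\<^sub>R vC + (q$1) *\<^sub>R vE + (- q$1/10 - q$2/10 + q$3/5) *\<^sub>R vP1"
        using e by (simp add: vec4_eq V_defs algebra_simps)
      have "(1 - 2*q$1/5 - 2*q$2/5 - q$3/5) *\<^sub>R vP2 + (- q$1/2 + q$2/2) *\<^sub>R vC + (q$1) *\<^sub>R vE + (- q$1/10 - q$2/10 + q$3/5) *\<^sub>R vP1 \<in> convex hull S_F"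
        by (rule conv4_hull[OF vP2_in vC_in vE_in vP1_in]) (use h c e in linarith)+
      then show ?thesis using eq by simp
    next
      case False
      note c = False c0
      have eq: "q = (1 - q$1/2 - q$2/2) *\<^sub>R vP2 + (- q$1/2 + q$2/2) *\<^sub>R vC + (q$1/2 - q$2/2 + q$3) *\<^sub>R vE + (q$1/2 + q$2/2 - q$3) *\<^sub>R vF"
        using e by (simp add: vec4_eq V_defs algebra_simps)
      have "(1 - q$1/2 - q$2/2) *\<^sub>R vP2 + (- q$1/2 + q$2/2) *\<^sub>R vC + (q$1/2 - q$2/2 + q$3) *\<^sub>R vE + (q$1/2 + q$2/2 - q$3) *\<^sub>R vF \<in> convex hull S_F"
        by (rule conv4_hull[OF vP2_in vC_in vE_in vF_in]) (use h c e in linarith)+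
      then show ?thesis using eq by simp
    qed
  qed
qed

lemma sig3:
  assumes h0: "hf (q$1) (q$2) (q$3) (q$4)" and e: "5*q$1 + 79*q$2 + 21*q$3 + 95*q$4 = 105"
  shows "q \<in> convex hull S_F"
proof -
  have h: "0 \<le> q$1" "0 \<le> q$2" "0 \<le> q$3" "0 \<le> q$4" "21 \<le> q$1 + q$2 + 19*q$3 + 19*q$4"
    "5 \<le> 2*q$1 + 2*q$2 + q$3 + q$4" "105 \<le> 5*q$1 + 79*q$2 + 21*q$3 + 95*q$4"
    "105 \<le> 79*q$1 + 5*q$2 + 95*q$3 + 21*q$4" using h0 by (simp_all add: hf_def)
  note c = TrueI
  have eq: "q = (1 - 4*q$2/5 - q$3/5 - q$4) *\<^sub>R vA + (- q$2/5 + q$3/5) *\<^sub>R vP1 + (q$4) *\<^sub>R vD + (q$2) *\<^sub>R vE"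
    using e by (simp add: vec4_eq V_defs algebra_simps)
  have "(1 - 4*q$2/5 - q$3/5 - q$4) *\<^sub>R vA + (- q$2/5 + q$3/5) *\<^sub>R vP1 + (q$4) *\<^sub>R vD + (q$2) *\<^sub>R vE \<in> convex hull S_F"
    by (rule conv4_hull[OF vA_in vP1_in vD_in vE_in]) (use h c e in linarith)+
  then show ?thesis using eq by simp
qed

lemma sig4:
  assumes h0: "hf (q$1) (q$2) (q$3) (q$4)" and e: "79*q$1 + 5*q$2 + 95*q$3 + 21*q$4 = 105"
  shows "q \<in> convex hull S_F"
proof -
  have h: "0 \<le> q$1" "0 \<le> q$2" "0 \<le> q$3" "0 \<le> q$4" "21 \<le> q$1 + q$2 + 19*q$3 + 19*q$4"
    "5 \<le> 2*q$1 + 2*q$2 + q$3 + q$4" "105 \<le> 5*q$1 + 79*q$2 + 21*q$3 + 95*q$4"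
    "105 \<le> 79*q$1 + 5*q$2 + 95*q$3 + 21*q$4" using h0 by (simp_all add: hf_def)
  note c = TrueI
  have eq: "q = (1 - 4*q$1/5 - q$3 - q$4/5) *\<^sub>R vB + (- q$1/5 + q$4/5) *\<^sub>R vP2 + (q$3) *\<^sub>R vC + (q$1) *\<^sub>R vF"
    using e by (simp add: vec4_eq V_defs algebra_simps)
  have "(1 - 4*q$1/5 - q$3 - q$4/5) *\<^sub>R vB + (- q$1/5 + q$4/5) *\<^sub>R vP2 + (q$3) *\<^sub>R vC + (q$1) *\<^sub>R vF \<in> convex hull S_F"
    by (rule conv4_hull[OF vB_in vP2_in vC_in vF_in]) (use h c e in linarith)+
  then show ?thesis using eq by simp
qed


lemma np_convex: "convex (newton_polyhedron S)"
  unfolding newton_polyhedron_def by (rule convex_convex_hull)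

lemma np_orth: "a \<in> S \<Longrightarrow> \<forall>i. 0 \<le> k$i \<Longrightarrow> a + k \<in> newton_polyhedron S"
  unfolding newton_polyhedron_def by (rule hull_inc) blast

lemma np_hull_plus:
  fixes S :: "(real^'n) set"
  assumes "q \<in> convex hull S" "\<forall>i. 0 \<le> k$i"
  shows "q + k \<in> newton_polyhedron S"
proof -
  define T where "T = {q. \<forall>k. (\<forall>i. 0 \<le> k$i) \<longrightarrow> q + k \<in> newton_polyhedron S}"
  have "convex T"
  proof (rule convexI)
    fix x y :: "real^'n" and u v :: real
    assume x: "x \<in> T" and y: "y \<in> T" and uv: "0 \<le> u" "0 \<le> v" "u + v = 1"
    show "u *\<^sub>R x + v *\<^sub>R y \<in> T" unfolding T_def
    proof (intro CollectI allI impI)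
      fix k :: "real^'n" assume k: "\<forall>i. 0 \<le> k$i"
      have "u *\<^sub>R (x + k) + v *\<^sub>R (y + k) = u *\<^sub>R x + v *\<^sub>R y + (u + v) *\<^sub>R k"
        by (simp add: algebra_simps)
      also have "\<dots> = u *\<^sub>R x + v *\<^sub>R y + k" using uv(3) by simp
      finally have eq: "u *\<^sub>R (x + k) + v *\<^sub>R (y + k) = u *\<^sub>R x + v *\<^sub>R y + k" .
      have "x + k \<in> newton_polyhedron S" "y + k \<in> newton_polyhedron S"
        using x y k by (auto simp: T_def)
      then have "u *\<^sub>R (x + k) + v *\<^sub>R (y + k) \<in> newton_polyhedron S"
        using np_convex uv by (intro convexD) auto
      then show "u *\<^sub>R x + v *\<^sub>R y + k \<in> newton_polyhedron S" using eq by simp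
    qed
  qed
  moreover have "S \<subseteq> T" using np_orth by (auto simp: T_def)
  ultimately have "convex hull S \<subseteq> T" by (intro hull_minimal)
  then show ?thesis using assms by (auto simp: T_def)
qed

lemma np_sub:
  assumes "\<And>a k. a \<in> S \<Longrightarrow> \<forall>i. 0 \<le> k$i \<Longrightarrow> a + k \<in> C" "convex C"
  shows "newton_polyhedron S \<subseteq> C"
  unfolding newton_polyhedron_def using assms by (intro hull_minimal) auto

lemma hf_set: "{y::real^4. hf (y$1) (y$2) (y$3) (y$4)} =
  {y. 0 \<le> inner (vector[1,0,0,0]) y} \<inter> {y. 0 \<le> inner (vector[0,1,0,0]) y} \<inter>
  {y. 0 \<le> inner (vector[0,0,1,0]) y} \<inter> {y. 0 \<le> inner (vector[0,0,0,1]) y} \<inter>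
  {y. 21 \<le> inner (vector[1,1,19,19]) y} \<inter> {y. 5 \<le> inner (vector[2,2,1,1]) y} \<inter>
  {y. 105 \<le> inner (vector[5,79,21,95]) y} \<inter> {y. 105 \<le> inner (vector[79,5,95,21]) y}"
  by (auto simp: hf_def inner_vec_def sum_4)

lemma hg_set: "{y::real^4. hg (y$1) (y$2) (y$3) (y$4)} =
  {y. 0 \<le> inner (vector[1,0,0,0]) y} \<inter> {y. 0 \<le> inner (vector[0,1,0,0]) y} \<inter>
  {y. 0 \<le> inner (vector[0,0,1,0]) y} \<inter> {y. 0 \<le> inner (vector[0,0,0,1]) y} \<inter>
  {y. 20 \<le> inner (vector[1,1,18,18]) y} \<inter> {y. 5 \<le> inner (vector[2,2,1,1]) y} \<inter>
  {y. 105 \<le> inner (vector[5,79,21,95]) y} \<inter> {y. 105 \<le> inner (vector[79,5,95,21]) y} \<inter>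
  {y. 210 \<le> inner (vector[10,11,189,190]) y} \<inter> {y. 210 \<le> inner (vector[11,10,190,189]) y}"
  by (auto simp: hg_def inner_vec_def sum_4)

lemma hf_convex: "convex {y::real^4. hf (y$1) (y$2) (y$3) (y$4)}"
  unfolding hf_set by (intro convex_Int convex_halfspace_ge)

lemma hg_convex: "convex {y::real^4. hg (y$1) (y$2) (y$3) (y$4)}"
  unfolding hg_set by (intro convex_Int convex_halfspace_ge)

lemma NPF_sub: "newton_polyhedron S_F \<subseteq> {y. hf (y$1) (y$2) (y$3) (y$4)}"
  by (rule np_sub[OF _ hf_convex]) (auto simp: SF_eq V_defs hf_def forall_4)

lemma NPG_sub: "newton_polyhedron (insert W_pt S_F) \<subseteq> {y. hg (y$1) (y$2) (y$3) (y$4)}"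
  by (rule np_sub[OF _ hg_convex]) (auto simp: SF_eq V_defs W_pt_def hg_def forall_4)

lemma div_lin: "0 < (s::real) \<Longrightarrow> k * s \<le> X \<Longrightarrow> k \<le> X / s"
  by (simp add: pos_le_divide_eq)

lemma hf_scale:
  assumes "0 < s" "0 \<le> a" "0 \<le> b" "0 \<le> c" "0 \<le> d" "21 * s \<le> a+b+19*c+19*d" "5 * s \<le> 2*a+2*b+c+d"
    "105 * s \<le> 5*a+79*b+21*c+95*d" "105 * s \<le> 79*a+5*b+95*c+21*d"
  shows "hf (a/s) (b/s) (c/s) (d/s)"
proof -
  have e: "\<And>p1 p2 p3 p4. p1*(a/s) + p2*(b/s) + p3*(c/s) + p4*(d/s) = (p1*a+p2*b+p3*c+p4*d)/s"
    by (simp add: add_divide_distrib)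
  have "21 \<le> 1*(a/s) + 1*(b/s) + 19*(c/s) + 19*(d/s)" unfolding e using assms by (intro div_lin) auto
  moreover have "5 \<le> 2*(a/s) + 2*(b/s) + 1*(c/s) + 1*(d/s)" unfolding e using assms by (intro div_lin) auto
  moreover have "105 \<le> 5*(a/s) + 79*(b/s) + 21*(c/s) + 95*(d/s)" unfolding e using assms by (intro div_lin) auto
  moreover have "105 \<le> 79*(a/s) + 5*(b/s) + 95*(c/s) + 21*(d/s)" unfolding e using assms by (intro div_lin) auto
  ultimately show ?thesis using assms by (simp add: hf_def)
qed

lemma NPF_sup:
  assumes hy: "hf (y$1) (y$2) (y$3) (y$4)"
  shows "y \<in> newton_polyhedron S_F"
proof -
  have h: "0 \<le> y$1" "0 \<le> y$2" "0 \<le> y$3" "0 \<le> y$4" "21 \<le> y$1 + y$2 + 19*y$3 + 19*y$4"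
    "5 \<le> 2*y$1 + 2*y$2 + y$3 + y$4" "105 \<le> 5*y$1 + 79*y$2 + 21*y$3 + 95*y$4"
    "105 \<le> 79*y$1 + 5*y$2 + 95*y$3 + 21*y$4" using hy by (simp_all add: hf_def)
  define t1 where "t1 = (y$1 + y$2 + 19*y$3 + 19*y$4) / 21"
  define t2 where "t2 = (2*y$1 + 2*y$2 + y$3 + y$4) / 5"
  define t3 where "t3 = (5*y$1 + 79*y$2 + 21*y$3 + 95*y$4) / 105"
  define t4 where "t4 = (79*y$1 + 5*y$2 + 95*y$3 + 21*y$4) / 105"
  obtain t where t: "1 \<le> t" "t \<le> t1" "t \<le> t2" "t \<le> t3" "t \<le> t4" "t = t1 \<or> t = t2 \<or> t = t3 \<or> t = t4"
  proof
    show "1 \<le> min (min t1 t2) (min t3 t4)" using h by (simp add: t1_def t2_def t3_def t4_def)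
  qed (auto simp: min_def)
  have tpos: "0 < t" using t by simp
  define q where "q = (1/t) *\<^sub>R y"
  have qc: "q$1 = y$1/t" "q$2 = y$2/t" "q$3 = y$3/t" "q$4 = y$4/t" by (simp_all add: q_def)
  have hq: "hf (q$1) (q$2) (q$3) (q$4)" unfolding qc
    by (rule hf_scale[OF tpos]) (use h t in \<open>simp_all add: t1_def t2_def t3_def t4_def\<close>)
  have "q \<in> convex hull S_F"
  proof -
    have l: "q$1 + q$2 + 19*q$3 + 19*q$4 = 21 * (t1 / t)"
         "2*q$1 + 2*q$2 + q$3 + q$4 = 5 * (t2 / t)"
         "5*q$1 + 79*q$2 + 21*q$3 + 95*q$4 = 105 * (t3 / t)"
         "79*q$1 + 5*q$2 + 95*q$3 + 21*q$4 = 105 * (t4 / t)"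
      unfolding qc t1_def t2_def t3_def t4_def using tpos by (simp_all add: field_simps)
    from t(6) show ?thesis
    proof (elim disjE)
      assume "t = t1" then show ?thesis using l tpos by (intro sig1[OF hq]) simp
    next
      assume "t = t2" then show ?thesis using l tpos by (intro sig2[OF hq]) simp
    next
      assume "t = t3" then show ?thesis using l tpos by (intro sig3[OF hq]) simp
    next
      assume "t = t4" then show ?thesis using l tpos by (intro sig4[OF hq]) simp
    qed
  qed
  moreover have "\<forall>i. 0 \<le> (y - q)$i"
  proof
    fix i
    have "(y - q)$i = (1 - 1/t) * y$i" by (simp add: q_def algebra_simps)
    moreover have "0 \<le> y$i" using h exhaust_4[of i] by auto
    moreover have "1/t \<le> 1" using t by simp
    ultimately show "0 \<le> (y - q)$i" by simp
  qed
  ultimately have "q + (y - q) \<in> newton_polyhedron S_F" by (rule np_hull_plus)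
  then show ?thesis by simp
qed

lemma NPF_eq: "newton_polyhedron S_F = {y. hf (y$1) (y$2) (y$3) (y$4)}"
  using NPF_sub NPF_sup by auto


lemma NPF_G: "newton_polyhedron S_F \<subseteq> newton_polyhedron (insert W_pt S_F)"
  unfolding newton_polyhedron_def by (rule hull_mono) auto

lemma W_in: "W_pt \<in> newton_polyhedron (insert W_pt S_F)"
  using np_orth[of W_pt "insert W_pt S_F" 0] by simp

lemma NPG_sup:
  assumes hy: "hg (y$1) (y$2) (y$3) (y$4)"
  shows "y \<in> newton_polyhedron (insert W_pt S_F)"
proof -
  have h: "0 \<le> y$1" "0 \<le> y$2" "0 \<le> y$3" "0 \<le> y$4" "20 \<le> y$1 + y$2 + 18*y$3 + 18*y$4"
    "5 \<le> 2*y$1 + 2*y$2 + y$3 + y$4" "105 \<le> 5*y$1 + 79*y$2 + 21*y$3 + 95*y$4"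
    "105 \<le> 79*y$1 + 5*y$2 + 95*y$3 + 21*y$4" "210 \<le> 10*y$1 + 11*y$2 + 189*y$3 + 190*y$4"
    "210 \<le> 11*y$1 + 10*y$2 + 190*y$3 + 189*y$4" using hy by (simp_all add: hg_def)
  show ?thesis
  proof (cases "21 \<le> y$1 + y$2 + 19*y$3 + 19*y$4")
    case True
    then have "hf (y$1) (y$2) (y$3) (y$4)" using h by (simp add: hf_def)
    then show ?thesis using NPF_sup NPF_G by auto
  next
    case False
    define s where "s = y$1 + y$2 + 19*y$3 + 19*y$4 - 20"
    have s01: "0 \<le> s" "s < 1" using h False by (simp_all add: s_def)
    show ?thesis
    proof (cases "s = 0")
      case True
      have "y$3 = 0" "y$4 = 0" "y$1 = 10" "y$2 = 10" using h True s_def by linarith+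
      then have "y = W_pt" by (simp add: vec4_eq W_pt_def)
      then show ?thesis using W_in by simp
    next
      case False
      then have spos: "0 < s" using s01 by simp
      define z where "z = y - W_pt + s *\<^sub>R W_pt"
      have zc: "z$1 = y$1 - 10 + 10 * s" "z$2 = y$2 - 10 + 10 * s" "z$3 = y$3" "z$4 = y$4"
        by (simp_all add: z_def W_pt_def)
      define q where "q = (1/s) *\<^sub>R z"
      have qc: "q$1 = z$1/s" "q$2 = z$2/s" "q$3 = z$3/s" "q$4 = z$4/s" by (simp_all add: q_def)
      have "hf (q$1) (q$2) (q$3) (q$4)" unfolding qc
        by (rule hf_scale[OF spos]) (use h zc s_def s01 in linarith)+
      then have qF: "q \<in> newton_polyhedron S_F" by (rule NPF_sup)
      have "s *\<^sub>R q = z" using spos by (simp add: q_def)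
      then have "y = (1 - s) *\<^sub>R W_pt + s *\<^sub>R q" by (simp add: z_def algebra_simps)
      moreover have "(1 - s) *\<^sub>R W_pt + s *\<^sub>R q \<in> newton_polyhedron (insert W_pt S_F)"
        using s01 by (intro convexD[OF np_convex W_in] subsetD[OF NPF_G qF]) auto
      ultimately show ?thesis by simp
    qed
  qed
qed

lemma NPG_eq: "newton_polyhedron (insert W_pt S_F) = {y. hg (y$1) (y$2) (y$3) (y$4)}"
  using NPG_sub NPG_sup by auto

lemma proper: "newton_polyhedron S_F \<subset> newton_polyhedron (insert W_pt S_F)"
proof -
  have "W_pt \<notin> newton_polyhedron S_F" unfolding NPF_eq by (simp add: W_pt_def hf_def)
  then show ?thesis using NPF_G W_in by auto
qed



lemma pred_le_real[measurable]:
  fixes f g :: "'a \<Rightarrow> real"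
  assumes [measurable]: "f \<in> borel_measurable M" "g \<in> borel_measurable M"
  shows "Measurable.pred M (\<lambda>x. f x \<le> g x)"
proof -
  have "Measurable.pred M (\<lambda>x. 0 \<le> g x - f x)" by measurable
  then show ?thesis by simp
qed

lemma shear:
  fixes J :: "'i set" and i :: 'i and c :: "('i \<Rightarrow> real) \<Rightarrow> real" and P :: "('i \<Rightarrow> real) \<Rightarrow> bool"
  assumes J: "finite J" "i \<in> J"
    and cind: "\<And>x y. c (x(i := y)) = c x"
    and Pm[measurable]: "Measurable.pred (PiM J (\<lambda>_. lborel)) P"
    and PTm[measurable]: "Measurable.pred (PiM J (\<lambda>_. lborel)) (\<lambda>x. P (x(i := x i + c x)))"
  shows "emeasure (PiM J (\<lambda>_. lborel)) {x \<in> space (PiM J (\<lambda>_. lborel)). P (x(i := x i + c x))} =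
         emeasure (PiM J (\<lambda>_. lborel)) {x \<in> space (PiM J (\<lambda>_. lborel)). P x}"
proof -
  interpret product_sigma_finite "\<lambda>_::'i. lborel :: real measure" by standard
  define I where "I = J - {i}"
  have JI: "J = insert i I" "i \<notin> I" "finite I" using J by (auto simp: I_def)
  let ?M = "\<lambda>K. PiM K (\<lambda>_::'i. lborel :: real measure)"
  have s1: "{x \<in> space (?M J). P (x(i := x i + c x))} \<in> sets (?M J)" by measurable
  have s2: "{x \<in> space (?M J). P x} \<in> sets (?M J)" by measurable
  have inner: "(\<integral>\<^sup>+ y. indicator {x \<in> space (?M J). P (x(i := x i + c x))} (x(i := y)) \<partial>lborel) =
               (\<integral>\<^sup>+ y. indicator {x \<in> space (?M J). P x} (x(i := y)) \<partial>lborel)"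
    if x: "x \<in> space (?M I)" for x
  proof -
    have upd: "(\<lambda>y. x(i := y)) \<in> measurable lborel (?M J)"
      using measurable_component_update[OF x JI(2)] JI(1) by simp
    have sp: "x(i := y) \<in> space (?M J)" for y
      using upd by (auto simp: measurable_def)
    define g where "g = (\<lambda>y. indicator {y. P (x(i := y))} y :: ennreal)"
    have gm: "g \<in> borel_measurable borel"
    proof -
      have "Measurable.pred lborel (\<lambda>y. P (x(i := y)))"
        using measurable_compose[OF upd Pm] by (simp add: comp_def)
      then show ?thesis unfolding g_def by (simp add: measurable_lborel1)
    qed
    have "(\<integral>\<^sup>+ y. indicator {x \<in> space (?M J). P (x(i := x i + c x))} (x(i := y)) \<partial>lborel) =
          (\<integral>\<^sup>+ y. g (c x + 1 * y) \<partial>lborel)"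
      using sp by (intro nn_integral_cong) (auto simp: g_def indicator_def cind add.commute)
    also have "\<dots> = (\<integral>\<^sup>+ y. g y \<partial>lborel)"
      using nn_integral_real_affine[OF gm, of 1 "c x"] by simp
    also have "\<dots> = (\<integral>\<^sup>+ y. indicator {x \<in> space (?M J). P x} (x(i := y)) \<partial>lborel)"
      using sp by (intro nn_integral_cong) (auto simp: g_def indicator_def)
    finally show ?thesis .
  qed
  have "emeasure (?M J) {x \<in> space (?M J). P (x(i := x i + c x))} =
        (\<integral>\<^sup>+ x. indicator {x \<in> space (?M J). P (x(i := x i + c x))} x \<partial>?M J)"
    using s1 by simp
  also have "\<dots> = (\<integral>\<^sup>+ x. (\<integral>\<^sup>+ y. indicator {x \<in> space (?M J). P (x(i := x i + c x))} (x(i := y)) \<partial>lborel) \<partial>?M I)"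
    unfolding JI(1) using JI s1 by (subst product_nn_integral_insert) (auto simp flip: JI(1))
  also have "\<dots> = (\<integral>\<^sup>+ x. (\<integral>\<^sup>+ y. indicator {x \<in> space (?M J). P x} (x(i := y)) \<partial>lborel) \<partial>?M I)"
    by (intro nn_integral_cong inner)
  also have "\<dots> = (\<integral>\<^sup>+ x. indicator {x \<in> space (?M J). P x} x \<partial>?M J)"
    unfolding JI(1) using JI s2 by (subst product_nn_integral_insert) (auto simp flip: JI(1))
  also have "\<dots> = emeasure (?M J) {x \<in> space (?M J). P x}"
    using s2 by simp
  finally show ?thesis .
qed

lemma peel:
  fixes I :: "'i set" and h :: "('i \<Rightarrow> real) \<Rightarrow> real"
  assumes "finite I" "i \<notin> I"
    and hm: "h \<in> borel_measurable (PiM (insert i I) (\<lambda>_. lborel))"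
    and inner: "\<And>x. x \<in> space (PiM I (\<lambda>_. lborel)) \<Longrightarrow> (\<integral>\<^sup>+y. ennreal (h (x(i := y))) \<partial>lborel) = ennreal (k x)"
  shows "(\<integral>\<^sup>+x. ennreal (h x) \<partial>PiM (insert i I) (\<lambda>_. lborel)) = (\<integral>\<^sup>+x. ennreal (k x) \<partial>PiM I (\<lambda>_. lborel))"
proof -
  interpret product_sigma_finite "\<lambda>_::'i. lborel :: real measure" by standard
  show ?thesis using assms by (subst product_nn_integral_insert) (auto intro!: nn_integral_cong)
qed

lemma ftc:
  fixes f F :: "real \<Rightarrow> real"
  assumes "G \<Longrightarrow> a \<le> b"
    and "\<And>y. G \<Longrightarrow> a \<le> y \<Longrightarrow> y \<le> b \<Longrightarrow> (F has_real_derivative f y) (at y)"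
    and "\<And>y. G \<Longrightarrow> a \<le> y \<Longrightarrow> y \<le> b \<Longrightarrow> 0 \<le> f y"
    and fm: "f \<in> borel_measurable borel"
  shows "(\<integral>\<^sup>+y. ennreal (if G \<and> a \<le> y \<and> y \<le> b then f y else 0) \<partial>lborel) = ennreal (if G then F b - F a else 0)"
proof (cases G)
  case True
  have "(\<integral>\<^sup>+y. ennreal (if G \<and> a \<le> y \<and> y \<le> b then f y else 0) \<partial>lborel) =
        (\<integral>\<^sup>+y. ennreal (f y) * indicator {a..b} y \<partial>lborel)"
    using True by (intro nn_integral_cong) (auto simp: indicator_def)
  also have "\<dots> = ennreal (F b - F a)"
    using assms True by (intro nn_integral_FTC_Icc) auto
  finally show ?thesis using True by simp
qed simp


definition nice :: "real \<Rightarrow> real \<Rightarrow> real \<Rightarrow> real \<Rightarrow> bool" where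
  "nice s b c d \<longleftrightarrow> s < 1 \<and> 0 \<le> c \<and> 0 \<le> d \<and> c + d \<le> s \<and> c + 10 - 10 * s \<le> b \<and> b \<le> 10 + 11 * s - 19 * c - 20 * d"

lemma step2:
  "(\<integral>\<^sup>+y. ennreal (if nice s y c d then 1 else 0) \<partial>lborel) =
   ennreal (if s < 1 \<and> 0 \<le> c \<and> 0 \<le> d \<and> c + d \<le> s then 21 * s - 20 * c - 20 * d else 0)"
proof -
  let ?G = "s < 1 \<and> 0 \<le> c \<and> 0 \<le> d \<and> c + d \<le> s"
  have "(\<integral>\<^sup>+y. ennreal (if nice s y c d then 1 else 0) \<partial>lborel) =
        (\<integral>\<^sup>+y. ennreal (if ?G \<and> c + 10 - 10 * s \<le> y \<and> y \<le> 10 + 11 * s - 19 * c - 20 * d then (\<lambda>_. 1) y else 0) \<partial>lborel)"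
    by (intro nn_integral_cong) (auto simp: nice_def)
  also have "\<dots> = ennreal (if ?G then (10 + 11 * s - 19 * c - 20 * d) - (c + 10 - 10 * s) else 0)"
    by (rule ftc[where F = "\<lambda>y. y"]) (auto intro!: derivative_eq_intros)
  also have "\<dots> = ennreal (if ?G then 21 * s - 20 * c - 20 * d else 0)"
    by (simp add: algebra_simps)
  finally show ?thesis .
qed

lemma step3:
  "(\<integral>\<^sup>+y. ennreal (if s < 1 \<and> 0 \<le> y \<and> 0 \<le> d \<and> y + d \<le> s then 21 * s - 20 * y - 20 * d else 0) \<partial>lborel) =
   ennreal (if s < 1 \<and> 0 \<le> d \<and> d \<le> s then (s - d) * (11 * s - 10 * d) else 0)"
proof -
  let ?G = "s < 1 \<and> 0 \<le> d \<and> d \<le> s"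
  have "(\<integral>\<^sup>+y. ennreal (if s < 1 \<and> 0 \<le> y \<and> 0 \<le> d \<and> y + d \<le> s then 21 * s - 20 * y - 20 * d else 0) \<partial>lborel) =
        (\<integral>\<^sup>+y. ennreal (if ?G \<and> 0 \<le> y \<and> y \<le> s - d then 21 * s - 20 * y - 20 * d else 0) \<partial>lborel)"
    by (intro nn_integral_cong) auto
  also have "\<dots> = ennreal (if ?G then ((21 * s - 20 * d) * (s - d) - 10 * (s - d)^2) - ((21 * s - 20 * d) * 0 - 10 * 0^2) else 0)"
    by (rule ftc[where F = "\<lambda>y. (21 * s - 20 * d) * y - 10 * y^2"]) (auto intro!: derivative_eq_intros)
  also have "\<dots> = ennreal (if ?G then (s - d) * (11 * s - 10 * d) else 0)"
    by (simp add: algebra_simps power2_eq_square)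
  finally show ?thesis .
qed

lemma step4:
  "(\<integral>\<^sup>+y. ennreal (if s < 1 \<and> 0 \<le> y \<and> y \<le> s then (s - y) * (11 * s - 10 * y) else 0) \<partial>lborel) =
   ennreal (if 0 \<le> s \<and> s < 1 then 23 / 6 * s ^ 3 else 0)"
proof -
  let ?G = "0 \<le> s \<and> s < 1"
  have "(\<integral>\<^sup>+y. ennreal (if s < 1 \<and> 0 \<le> y \<and> y \<le> s then (s - y) * (11 * s - 10 * y) else 0) \<partial>lborel) =
        (\<integral>\<^sup>+y. ennreal (if ?G \<and> 0 \<le> y \<and> y \<le> s then (s - y) * (11 * s - 10 * y) else 0) \<partial>lborel)"
    by (intro nn_integral_cong) auto
  also have "\<dots> = ennreal (if ?G then (11 * s^2 * s - 21 / 2 * s * s^2 + 10 / 3 * s^3) - (11 * s^2 * 0 - 21 / 2 * s * 0^2 + 10 / 3 * 0^3) else 0)"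
    apply (rule ftc[where F = "\<lambda>y. 11 * s^2 * y - 21 / 2 * s * y^2 + 10 / 3 * y^3"])
    subgoal by simp
    subgoal by (auto intro!: derivative_eq_intros simp: algebra_simps power2_eq_square power3_eq_cube)
    subgoal by (auto intro!: mult_nonneg_nonneg)
    subgoal by measurable
    done
  also have "\<dots> = ennreal (if ?G then 23 / 6 * s ^ 3 else 0)"
    by (simp add: algebra_simps power2_eq_square power3_eq_cube)
  finally show ?thesis .
qed

lemma final_int:
  fixes p P :: "real \<Rightarrow> real"
  assumes "\<And>y. 0 \<le> y \<Longrightarrow> y \<le> 1 \<Longrightarrow> (P has_real_derivative p y) (at y)"
    and "\<And>y. 0 \<le> y \<Longrightarrow> y \<le> 1 \<Longrightarrow> 0 \<le> p y"
    and "p \<in> borel_measurable borel"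
  shows "(\<integral>\<^sup>+y. ennreal (if 0 \<le> y \<and> y < 1 then p y else 0) \<partial>lborel) = ennreal (P 1 - P 0)"
proof -
  have "(\<integral>\<^sup>+y. ennreal (if 0 \<le> y \<and> y < 1 then p y else 0) \<partial>lborel) =
        (\<integral>\<^sup>+y. ennreal (if True \<and> 0 \<le> y \<and> y \<le> 1 then p y else 0) \<partial>lborel)"
    by (intro nn_integral_cong_AE) (use AE_lborel_singleton[of 1] in \<open>auto elim!: eventually_mono\<close>)
  also have "\<dots> = ennreal (if True then P 1 - P 0 else 0)"
    using assms by (intro ftc) auto
  finally show ?thesis by simp
qed


lemma vol4: "emeasure (PiM {1,2,3,4::4} (\<lambda>_. lborel))
   {x \<in> space (PiM {1,2,3,4::4} (\<lambda>_. lborel)). nice (x 1) (x 2) (x 3) (x 4)} = ennreal (23/24)"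
proof -
  interpret product_sigma_finite "\<lambda>_::4. lborel :: real measure" by standard
  let ?M = "\<lambda>K. PiM K (\<lambda>_::4. lborel :: real measure)"
  have J: "{1,2,3,4::4} = insert 2 {1,3,4}" "{1,3,4::4} = insert 3 {1,4}" "{1,4::4} = insert 4 {1}" by auto
  have sets: "{x \<in> space (?M {1,2,3,4}). nice (x 1) (x 2) (x 3) (x 4)} \<in> sets (?M {1,2,3,4})"
    unfolding nice_def by measurable
  have "emeasure (?M {1,2,3,4}) {x \<in> space (?M {1,2,3,4}). nice (x 1) (x 2) (x 3) (x 4)} =
        (\<integral>\<^sup>+x. indicator {x \<in> space (?M {1,2,3,4}). nice (x 1) (x 2) (x 3) (x 4)} x \<partial>?M {1,2,3,4})"
    using sets by simp
  also have "\<dots> = (\<integral>\<^sup>+x. ennreal (if nice (x 1) (x 2) (x 3) (x 4) then 1 else 0) \<partial>?M (insert 2 {1,3,4}))"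
    unfolding J(1) by (intro nn_integral_cong) (auto simp: indicator_def)
  also have "\<dots> = (\<integral>\<^sup>+x. ennreal (if x 1 < 1 \<and> 0 \<le> x 3 \<and> 0 \<le> x 4 \<and> x 3 + x 4 \<le> x 1
                       then 21 * x 1 - 20 * x 3 - 20 * x 4 else 0) \<partial>?M (insert 3 {1,4}))"
    unfolding J(2)[symmetric]
    apply (rule peel)
    subgoal by simp
    subgoal by simp
    subgoal unfolding nice_def by measurable
    subgoal by (simp add: step2 cong: if_cong)
    done
  also have "\<dots> = (\<integral>\<^sup>+x. ennreal (if x 1 < 1 \<and> 0 \<le> x 4 \<and> x 4 \<le> x 1
                       then (x 1 - x 4) * (11 * x 1 - 10 * x 4) else 0) \<partial>?M (insert 4 {1}))"
    unfolding J(3)[symmetric]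
    apply (rule peel)
    subgoal by simp
    subgoal by simp
    subgoal by measurable
    subgoal by (simp add: step3 cong: if_cong)
    done
  also have "\<dots> = (\<integral>\<^sup>+x. ennreal (if 0 \<le> x 1 \<and> x 1 < 1 then 23 / 6 * x 1 ^ 3 else 0) \<partial>?M {1})"
    apply (rule peel)
    subgoal by simp
    subgoal by simp
    subgoal by measurable
    subgoal by (simp add: step4 cong: if_cong)
    done
  also have "\<dots> = (\<integral>\<^sup>+y. ennreal (if 0 \<le> y \<and> y < 1 then 23 / 6 * y ^ 3 else 0) \<partial>lborel)"
    by (rule product_nn_integral_singleton[where f = "\<lambda>y. ennreal (if 0 \<le> y \<and> y < 1 then 23 / 6 * y ^ 3 else 0)"]) measurable
  also have "\<dots> = ennreal (23 / 24 * 1 ^ 4 - 23 / 24 * 0 ^ 4)"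
    by (rule final_int) (auto intro!: derivative_eq_intros simp: power3_eq_cube)
  finally show ?thesis by simp
qed


lemma step3z:
  "(\<integral>\<^sup>+y. ennreal (if s < 1 \<and> 0 \<le> y \<and> y \<le> s then 21 * s - 20 * y else 0) \<partial>lborel) =
   ennreal (if 0 \<le> s \<and> s < 1 then 11 * s^2 else 0)"
proof -
  have "(\<integral>\<^sup>+y. ennreal (if s < 1 \<and> 0 \<le> y \<and> y \<le> s then 21 * s - 20 * y else 0) \<partial>lborel) =
        (\<integral>\<^sup>+y. ennreal (if s < 1 \<and> 0 \<le> y \<and> 0 \<le> (0::real) \<and> y + 0 \<le> s then 21 * s - 20 * y - 20 * 0 else 0) \<partial>lborel)"
    by (intro nn_integral_cong) simp
  also have "\<dots> = ennreal (if s < 1 \<and> 0 \<le> (0::real) \<and> 0 \<le> s then (s - 0) * (11 * s - 10 * 0) else 0)"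
    by (rule step3)
  also have "\<dots> = ennreal (if 0 \<le> s \<and> s < 1 then 11 * s^2 else 0)"
    by (cases "0 \<le> s \<and> s < 1") (auto simp: power2_eq_square)
  finally show ?thesis .
qed

lemma vol123: "emeasure (PiM {1,2,3::4} (\<lambda>_. lborel))
   {x \<in> space (PiM {1,2,3::4} (\<lambda>_. lborel)). nice (x 1) (x 2) (x 3) 0} = ennreal (11/3)"
proof -
  interpret product_sigma_finite "\<lambda>_::4. lborel :: real measure" by standard
  let ?M = "\<lambda>K. PiM K (\<lambda>_::4. lborel :: real measure)"
  have J: "{1,2,3::4} = insert 2 {1,3}" "{1,3::4} = insert 3 {1}" by auto
  have sets: "{x \<in> space (?M {1,2,3}). nice (x 1) (x 2) (x 3) 0} \<in> sets (?M {1,2,3})"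
    unfolding nice_def by measurable
  have "emeasure (?M {1,2,3}) {x \<in> space (?M {1,2,3}). nice (x 1) (x 2) (x 3) 0} =
        (\<integral>\<^sup>+x. indicator {x \<in> space (?M {1,2,3}). nice (x 1) (x 2) (x 3) 0} x \<partial>?M {1,2,3})"
    using sets by simp
  also have "\<dots> = (\<integral>\<^sup>+x. ennreal (if nice (x 1) (x 2) (x 3) 0 then 1 else 0) \<partial>?M (insert 2 {1,3}))"
    unfolding J(1) by (intro nn_integral_cong) (auto simp: indicator_def)
  also have "\<dots> = (\<integral>\<^sup>+x. ennreal (if x 1 < 1 \<and> 0 \<le> x 3 \<and> x 3 \<le> x 1
                       then 21 * x 1 - 20 * x 3 else 0) \<partial>?M (insert 3 {1}))"
    unfolding J(2)[symmetric]
    apply (rule peel)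
    subgoal by simp
    subgoal by simp
    subgoal unfolding nice_def by measurable
    subgoal by (simp add: step2 cong: if_cong)
    done
  also have "\<dots> = (\<integral>\<^sup>+x. ennreal (if 0 \<le> x 1 \<and> x 1 < 1 then 11 * (x 1)^2 else 0) \<partial>?M {1})"
    apply (rule peel)
    subgoal by simp
    subgoal by simp
    subgoal by measurable
    subgoal by (simp add: step3z cong: if_cong)
    done
  also have "\<dots> = (\<integral>\<^sup>+y. ennreal (if 0 \<le> y \<and> y < 1 then 11 * y^2 else 0) \<partial>lborel)"
    by (rule product_nn_integral_singleton[where f = "\<lambda>y. ennreal (if 0 \<le> y \<and> y < 1 then 11 * y^2 else 0)"]) measurable
  also have "\<dots> = ennreal (11 / 3 * 1 ^ 3 - 11 / 3 * 0 ^ 3)"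
    by (rule final_int) (auto intro!: derivative_eq_intros simp: power2_eq_square)
  finally show ?thesis by simp
qed

lemma vol124: "emeasure (PiM {1,2,4::4} (\<lambda>_. lborel))
   {x \<in> space (PiM {1,2,4::4} (\<lambda>_. lborel)). nice (x 1) (x 2) 0 (x 4)} = ennreal (11/3)"
proof -
  interpret product_sigma_finite "\<lambda>_::4. lborel :: real measure" by standard
  let ?M = "\<lambda>K. PiM K (\<lambda>_::4. lborel :: real measure)"
  have J: "{1,2,4::4} = insert 2 {1,4}" "{1,4::4} = insert 4 {1}" by auto
  have sets: "{x \<in> space (?M {1,2,4}). nice (x 1) (x 2) 0 (x 4)} \<in> sets (?M {1,2,4})"
    unfolding nice_def by measurable
  have "emeasure (?M {1,2,4}) {x \<in> space (?M {1,2,4}). nice (x 1) (x 2) 0 (x 4)} =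
        (\<integral>\<^sup>+x. indicator {x \<in> space (?M {1,2,4}). nice (x 1) (x 2) 0 (x 4)} x \<partial>?M {1,2,4})"
    using sets by simp
  also have "\<dots> = (\<integral>\<^sup>+x. ennreal (if nice (x 1) (x 2) 0 (x 4) then 1 else 0) \<partial>?M (insert 2 {1,4}))"
    unfolding J(1) by (intro nn_integral_cong) (auto simp: indicator_def)
  also have "\<dots> = (\<integral>\<^sup>+x. ennreal (if x 1 < 1 \<and> 0 \<le> x 4 \<and> x 4 \<le> x 1
                       then 21 * x 1 - 20 * x 4 else 0) \<partial>?M (insert 4 {1}))"
    unfolding J(2)[symmetric]
    apply (rule peel)
    subgoal by simp
    subgoal by simp
    subgoal unfolding nice_def by measurable
    subgoal by (simp add: step2 cong: if_cong)
    done
  also have "\<dots> = (\<integral>\<^sup>+x. ennreal (if 0 \<le> x 1 \<and> x 1 < 1 then 11 * (x 1)^2 else 0) \<partial>?M {1})"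
    apply (rule peel)
    subgoal by simp
    subgoal by simp
    subgoal by measurable
    subgoal by (simp add: step3z cong: if_cong)
    done
  also have "\<dots> = (\<integral>\<^sup>+y. ennreal (if 0 \<le> y \<and> y < 1 then 11 * y^2 else 0) \<partial>lborel)"
    by (rule product_nn_integral_singleton[where f = "\<lambda>y. ennreal (if 0 \<le> y \<and> y < 1 then 11 * y^2 else 0)"]) measurable
  also have "\<dots> = ennreal (11 / 3 * 1 ^ 3 - 11 / 3 * 0 ^ 3)"
    by (rule final_int) (auto intro!: derivative_eq_intros simp: power2_eq_square)
  finally show ?thesis by simp
qed

lemma vol12: "emeasure (PiM {1,2::4} (\<lambda>_. lborel))
   {x \<in> space (PiM {1,2::4} (\<lambda>_. lborel)). nice (x 1) (x 2) 0 0} = ennreal (21/2)"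
proof -
  interpret product_sigma_finite "\<lambda>_::4. lborel :: real measure" by standard
  let ?M = "\<lambda>K. PiM K (\<lambda>_::4. lborel :: real measure)"
  have J: "{1,2::4} = insert 2 {1}" by auto
  have sets: "{x \<in> space (?M {1,2}). nice (x 1) (x 2) 0 0} \<in> sets (?M {1,2})"
    unfolding nice_def by measurable
  have "emeasure (?M {1,2}) {x \<in> space (?M {1,2}). nice (x 1) (x 2) 0 0} =
        (\<integral>\<^sup>+x. indicator {x \<in> space (?M {1,2}). nice (x 1) (x 2) 0 0} x \<partial>?M {1,2})"
    using sets by simp
  also have "\<dots> = (\<integral>\<^sup>+x. ennreal (if nice (x 1) (x 2) 0 0 then 1 else 0) \<partial>?M (insert 2 {1}))"
    unfolding J(1) by (intro nn_integral_cong) (auto simp: indicator_def)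
  also have "\<dots> = (\<integral>\<^sup>+x. ennreal (if 0 \<le> x 1 \<and> x 1 < 1 then 21 * x 1 else 0) \<partial>?M {1})"
    apply (rule peel)
    subgoal by simp
    subgoal by simp
    subgoal unfolding nice_def by measurable
    subgoal by (simp add: step2 conj_commute cong: if_cong)
    done
  also have "\<dots> = (\<integral>\<^sup>+y. ennreal (if 0 \<le> y \<and> y < 1 then 21 * y else 0) \<partial>lborel)"
    by (rule product_nn_integral_singleton[where f = "\<lambda>y. ennreal (if 0 \<le> y \<and> y < 1 then 21 * y else 0)"]) measurable
  also have "\<dots> = ennreal (21 / 2 * 1 ^ 2 - 21 / 2 * 0 ^ 2)"
    by (rule final_int) (auto intro!: derivative_eq_intros simp: power2_eq_square)
  finally show ?thesis by simp
qed



definition cx :: "4 set \<Rightarrow> (4 \<Rightarrow> real) \<Rightarrow> 4 \<Rightarrow> real" where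
  "cx J x i = (if i \<in> J then x i else 0)"

lemma cx_meas[measurable]: "(\<lambda>x. cx J x i) \<in> borel_measurable (PiM J (\<lambda>_. lborel))"
proof (cases "i \<in> J")
  case True
  have "(\<lambda>x. x i) \<in> measurable (PiM J (\<lambda>_. lborel)) lborel"
    by (rule measurable_component_singleton[OF True])
  then show ?thesis using True by (simp add: cx_def)
qed (simp add: cx_def)

lemma coord_vol_eq:
  fixes p :: "real \<Rightarrow> real \<Rightarrow> real \<Rightarrow> real \<Rightarrow> bool"
  shows "coord_vol {y::real^4. p (y$1) (y$2) (y$3) (y$4)} J =
    measure (PiM J (\<lambda>_. lborel)) {x \<in> space (PiM J (\<lambda>_. lborel)).
      0 \<le> cx J x 1 \<and> 0 \<le> cx J x 2 \<and> 0 \<le> cx J x 3 \<and> 0 \<le> cx J x 4 \<and>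
      \<not> p (cx J x 1) (cx J x 2) (cx J x 3) (cx J x 4)}"
proof -
  have iff: "(\<forall>j\<in>J. 0 \<le> x j) \<longleftrightarrow> (0 \<le> cx J x 1 \<and> 0 \<le> cx J x 2 \<and> 0 \<le> cx J x 3 \<and> 0 \<le> cx J x 4)" for x
  proof
    assume "\<forall>j\<in>J. 0 \<le> x j" then show "0 \<le> cx J x 1 \<and> 0 \<le> cx J x 2 \<and> 0 \<le> cx J x 3 \<and> 0 \<le> cx J x 4"
      by (auto simp: cx_def)
  next
    assume a: "0 \<le> cx J x 1 \<and> 0 \<le> cx J x 2 \<and> 0 \<le> cx J x 3 \<and> 0 \<le> cx J x 4"
    show "\<forall>j\<in>J. 0 \<le> x j"
    proof
      fix j assume "j \<in> J"
      moreover have "0 \<le> cx J x j" using a exhaust_4[of j] by auto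
      ultimately show "0 \<le> x j" by (simp add: cx_def)
    qed
  qed
  have v: "(\<chi> i. if i \<in> J then x i else 0) $ k = cx J x k" for x k by (simp add: cx_def)
  have pt: "(x \<in> PiE J (\<lambda>_. UNIV) \<and> (\<forall>j\<in>J. 0 \<le> x j) \<and> (\<chi> i. if i \<in> J then x i else 0) \<notin> {y::real^4. p (y$1) (y$2) (y$3) (y$4)}) \<longleftrightarrow>
     (x \<in> space (PiM J (\<lambda>_. lborel)) \<and> 0 \<le> cx J x 1 \<and> 0 \<le> cx J x 2 \<and> 0 \<le> cx J x 3 \<and> 0 \<le> cx J x 4 \<and>
      \<not> p (cx J x 1) (cx J x 2) (cx J x 3) (cx J x 4))" for x
    unfolding iff v mem_Collect_eq space_PiM space_lborel by simp
  have "{x \<in> PiE J (\<lambda>_. UNIV). (\<forall>j\<in>J. 0 \<le> x j) \<and> (\<chi> i. if i \<in> J then x i else 0) \<notin> {y::real^4. p (y$1) (y$2) (y$3) (y$4)}} =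
     {x \<in> space (PiM J (\<lambda>_. lborel)). 0 \<le> cx J x 1 \<and> 0 \<le> cx J x 2 \<and> 0 \<le> cx J x 3 \<and> 0 \<le> cx J x 4 \<and>
      \<not> p (cx J x 1) (cx J x 2) (cx J x 3) (cx J x 4)}"
    using pt by blast
  then show ?thesis unfolding coord_vol_def by simp
qed

definition r :: "real \<Rightarrow> real \<Rightarrow> real \<Rightarrow> real \<Rightarrow> bool" where
  "r a b c d \<longleftrightarrow> hg a b c d \<and> a + b + 19*c + 19*d < 21"

lemma hf_hg: "hf a b c d \<Longrightarrow> hg a b c d"
  unfolding hf_def hg_def by (elim conjE, intro conjI; linarith)

lemma r_iff: "r a b c d \<longleftrightarrow> (0 \<le> a \<and> 0 \<le> b \<and> 0 \<le> c \<and> 0 \<le> d \<and> \<not> hf a b c d) \<and>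
   \<not> (0 \<le> a \<and> 0 \<le> b \<and> 0 \<le> c \<and> 0 \<le> d \<and> \<not> hg a b c d)"
proof
  assume "r a b c d"
  then have h: "hg a b c d" "a + b + 19*c + 19*d < 21" by (simp_all add: r_def)
  then have "0 \<le> a \<and> 0 \<le> b \<and> 0 \<le> c \<and> 0 \<le> d" by (simp add: hg_def)
  moreover have "\<not> hf a b c d" using h(2) by (simp add: hf_def)
  ultimately show "(0 \<le> a \<and> 0 \<le> b \<and> 0 \<le> c \<and> 0 \<le> d \<and> \<not> hf a b c d) \<and>
   \<not> (0 \<le> a \<and> 0 \<le> b \<and> 0 \<le> c \<and> 0 \<le> d \<and> \<not> hg a b c d)" using h(1) by simp
next
  assume a: "(0 \<le> a \<and> 0 \<le> b \<and> 0 \<le> c \<and> 0 \<le> d \<and> \<not> hf a b c d) \<and>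
   \<not> (0 \<le> a \<and> 0 \<le> b \<and> 0 \<le> c \<and> 0 \<le> d \<and> \<not> hg a b c d)"
  then have g: "hg a b c d" and nf: "\<not> hf a b c d" by auto
  have "a + b + 19*c + 19*d < 21"
  proof (rule ccontr)
    assume "\<not> a + b + 19*c + 19*d < 21"
    then have "hf a b c d" using g unfolding hg_def hf_def by simp
    then show False using nf by simp
  qed
  then show "r a b c d" using g by (simp add: r_def)
qed

lemma big_hf: "0 \<le> a \<Longrightarrow> 0 \<le> b \<Longrightarrow> 0 \<le> c \<Longrightarrow> 0 \<le> d \<Longrightarrow> 21 < a \<or> 21 < b \<or> 21 < c \<or> 21 < d \<Longrightarrow> hf a b c d"
  unfolding hf_def by (elim disjE; intro conjI; linarith)

lemma r_pos: "r a b c d \<Longrightarrow> 0 < a \<and> 0 < b"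
  unfolding r_def hg_def by (elim conjE, intro conjI; linarith)

lemma r_nice: "r a b c d \<longleftrightarrow> nice (a + (b + 19*c + 19*d - 20)) b c d"
proof
  assume "r a b c d"
  then have h: "0 \<le> a" "0 \<le> b" "0 \<le> c" "0 \<le> d" "20 \<le> a + b + 18 * c + 18 * d"
    "210 \<le> 10 * a + 11 * b + 189 * c + 190 * d" "210 \<le> 11 * a + 10 * b + 190 * c + 189 * d"
    "a + b + 19 * c + 19 * d < 21" by (simp_all add: r_def hg_def)
  show "nice (a + (b + 19*c + 19*d - 20)) b c d" unfolding nice_def using h by (simp add: algebra_simps)
next
  assume "nice (a + (b + 19*c + 19*d - 20)) b c d"
  then have h: "a + b + 19*c + 19*d < 21" "0 \<le> c" "0 \<le> d" "c + d \<le> a + b + 19*c + 19*d - 20"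
    "c + 10 - 10 * a - 10 * b - 190 * c - 190 * d + 200 \<le> b" "b \<le> 10 + 11 * a + 11 * b + 209 * c + 209 * d - 220 - 19 * c - 20 * d"
    by (simp_all add: nice_def algebra_simps)
  show "r a b c d" unfolding r_def hg_def using h by (intro conjI; linarith)
qed



lemma vol_diff:
  "coord_vol (newton_polyhedron S_F) J - coord_vol (newton_polyhedron (insert W_pt S_F)) J =
   measure (PiM J (\<lambda>_. lborel)) {x \<in> space (PiM J (\<lambda>_. lborel)). r (cx J x 1) (cx J x 2) (cx J x 3) (cx J x 4)}"
proof -
  let ?M = "PiM J (\<lambda>_::4. lborel :: real measure)"
  define AF where "AF = {x \<in> space ?M. 0 \<le> cx J x 1 \<and> 0 \<le> cx J x 2 \<and> 0 \<le> cx J x 3 \<and> 0 \<le> cx J x 4 \<and>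
      \<not> hf (cx J x 1) (cx J x 2) (cx J x 3) (cx J x 4)}"
  define AG where "AG = {x \<in> space ?M. 0 \<le> cx J x 1 \<and> 0 \<le> cx J x 2 \<and> 0 \<le> cx J x 3 \<and> 0 \<le> cx J x 4 \<and>
      \<not> hg (cx J x 1) (cx J x 2) (cx J x 3) (cx J x 4)}"
  have eqs: "coord_vol (newton_polyhedron S_F) J = measure ?M AF"
    "coord_vol (newton_polyhedron (insert W_pt S_F)) J = measure ?M AG"
    unfolding NPF_eq NPG_eq coord_vol_eq AF_def AG_def by simp_all
  have AFm: "AF \<in> sets ?M" unfolding AF_def hf_def by measurable
  have AGm: "AG \<in> sets ?M" unfolding AG_def hg_def by measurable
  have sub: "AG \<subseteq> AF" using hf_hg by (auto simp: AF_def AG_def)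
  have box: "AF \<subseteq> PiE J (\<lambda>_. {0..21})"
  proof
    fix x assume x: "x \<in> AF"
    show "x \<in> PiE J (\<lambda>_. {0..21})"
    proof -
      have "x \<in> PiE J (\<lambda>_. UNIV)" using x by (simp add: AF_def space_PiM)
      moreover have "x j \<in> {0..21}" if j: "j \<in> J" for j
      proof -
        have nn: "0 \<le> cx J x 1" "0 \<le> cx J x 2" "0 \<le> cx J x 3" "0 \<le> cx J x 4"
          and nh: "\<not> hf (cx J x 1) (cx J x 2) (cx J x 3) (cx J x 4)" using x by (simp_all add: AF_def)
        have le: "cx J x 1 \<le> 21 \<and> cx J x 2 \<le> 21 \<and> cx J x 3 \<le> 21 \<and> cx J x 4 \<le> 21"
        proof -
          have "\<not> (21 < cx J x 1 \<or> 21 < cx J x 2 \<or> 21 < cx J x 3 \<or> 21 < cx J x 4)"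
            using big_hf[OF nn] nh by blast
          then show ?thesis by auto
        qed
        have "0 \<le> cx J x j \<and> cx J x j \<le> 21" using nn le exhaust_4[of j] by auto
        then show ?thesis using j by (simp add: cx_def)
      qed
      ultimately show ?thesis by (auto simp: PiE_iff)
    qed
  qed
  have fin: "emeasure ?M AF \<noteq> \<infinity>"
  proof -
    interpret product_sigma_finite "\<lambda>_::4. lborel :: real measure" by standard
    have "emeasure ?M AF \<le> emeasure ?M (PiE J (\<lambda>_. {0..21}))"
      by (rule emeasure_mono[OF box]) (simp add: sets_PiM_I_finite)
    also have "\<dots> = (\<Prod>j\<in>J. emeasure lborel {0..21::real})"
      by (rule emeasure_PiM) auto
    also have "\<dots> < \<infinity>" by (simp add: power_less_top_ennreal)
    finally show ?thesis by simp
  qed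
  have diff: "AF - AG = {x \<in> space ?M. r (cx J x 1) (cx J x 2) (cx J x 3) (cx J x 4)}"
    unfolding AF_def AG_def r_iff by auto
  show ?thesis unfolding eqs diff[symmetric] by (rule measure_Diff[OF fin AFm AGm sub, symmetric])
qed



lemma neqI: "a \<in> Y \<Longrightarrow> a \<notin> X \<Longrightarrow> X \<noteq> Y" by auto

lemma sets_distinct0:
  "{1,2::4} \<noteq> {1,2,3}" "{1,2::4} \<noteq> {1,2,4}" "{1,2::4} \<noteq> {1,2,3,4}"
  "{1,2,3::4} \<noteq> {1,2,4}" "{1,2,3::4} \<noteq> {1,2,3,4}" "{1,2,4::4} \<noteq> {1,2,3,4}"
  apply (rule neqI[of 3]; simp)
  apply (rule neqI[of 4]; simp)
  apply (rule neqI[of 3]; simp)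
  apply (rule neqI[of 4]; simp)
  apply (rule neqI[of 4]; simp)
  apply (rule neqI[of 3]; simp)
  done

lemmas sets_distinct [simp] = sets_distinct0 sets_distinct0[THEN not_sym]

lemma RS4: "measure (PiM {1,2,3,4::4} (\<lambda>_. lborel))
  {x \<in> space (PiM {1,2,3,4::4} (\<lambda>_. lborel)). r (cx {1,2,3,4} x 1) (cx {1,2,3,4} x 2) (cx {1,2,3,4} x 3) (cx {1,2,3,4} x 4)} = 23/24"
proof -
  let ?M = "PiM {1,2,3,4::4} (\<lambda>_. lborel :: real measure)"
  let ?P = "\<lambda>x::4\<Rightarrow>real. nice (x 1) (x 2) (x 3) (x 4)"
  let ?c = "\<lambda>x::4\<Rightarrow>real. x 2 + 19 * x 3 + 19 * x 4 - 20"
  have seteq: "{x \<in> space ?M. r (cx {1,2,3,4} x 1) (cx {1,2,3,4} x 2) (cx {1,2,3,4} x 3) (cx {1,2,3,4} x 4)} =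
        {x \<in> space ?M. ?P (x(1 := x 1 + ?c x))}"
    by (auto simp: cx_def r_nice)
  have "emeasure ?M {x \<in> space ?M. ?P (x(1 := x 1 + ?c x))} = emeasure ?M {x \<in> space ?M. ?P x}"
    apply (rule shear[of "{1,2,3,4::4}" 1 ?c ?P])
    subgoal by simp
    subgoal by simp
    subgoal by simp
    subgoal unfolding nice_def by measurable
    subgoal unfolding nice_def by simp measurable
    done
  also have "\<dots> = ennreal (23/24)" by (rule vol4)
  finally have em: "emeasure ?M {x \<in> space ?M. ?P (x(1 := x 1 + ?c x))} = ennreal (23/24)" .
  show ?thesis unfolding seteq measure_def em by simp
qed

lemma RS123: "measure (PiM {1,2,3::4} (\<lambda>_. lborel))
  {x \<in> space (PiM {1,2,3::4} (\<lambda>_. lborel)). r (cx {1,2,3} x 1) (cx {1,2,3} x 2) (cx {1,2,3} x 3) (cx {1,2,3} x 4)} = 11/3"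
proof -
  let ?M = "PiM {1,2,3::4} (\<lambda>_. lborel :: real measure)"
  let ?P = "\<lambda>x::4\<Rightarrow>real. nice (x 1) (x 2) (x 3) 0"
  let ?c = "\<lambda>x::4\<Rightarrow>real. x 2 + 19 * x 3 + 19 * 0 - 20"
  have seteq: "{x \<in> space ?M. r (cx {1,2,3} x 1) (cx {1,2,3} x 2) (cx {1,2,3} x 3) (cx {1,2,3} x 4)} =
        {x \<in> space ?M. ?P (x(1 := x 1 + ?c x))}"
    by (auto simp: cx_def r_nice)
  have "emeasure ?M {x \<in> space ?M. ?P (x(1 := x 1 + ?c x))} = emeasure ?M {x \<in> space ?M. ?P x}"
    apply (rule shear[of "{1,2,3::4}" 1 ?c ?P])
    subgoal by simp
    subgoal by simp
    subgoal by simp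
    subgoal unfolding nice_def by measurable
    subgoal unfolding nice_def by simp measurable
    done
  also have "\<dots> = ennreal (11/3)" by (rule vol123)
  finally have em: "emeasure ?M {x \<in> space ?M. ?P (x(1 := x 1 + ?c x))} = ennreal (11/3)" .
  show ?thesis unfolding seteq measure_def em by simp
qed

lemma RS124: "measure (PiM {1,2,4::4} (\<lambda>_. lborel))
  {x \<in> space (PiM {1,2,4::4} (\<lambda>_. lborel)). r (cx {1,2,4} x 1) (cx {1,2,4} x 2) (cx {1,2,4} x 3) (cx {1,2,4} x 4)} = 11/3"
proof -
  let ?M = "PiM {1,2,4::4} (\<lambda>_. lborel :: real measure)"
  let ?P = "\<lambda>x::4\<Rightarrow>real. nice (x 1) (x 2) 0 (x 4)"
  let ?c = "\<lambda>x::4\<Rightarrow>real. x 2 + 19 * 0 + 19 * x 4 - 20"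
  have seteq: "{x \<in> space ?M. r (cx {1,2,4} x 1) (cx {1,2,4} x 2) (cx {1,2,4} x 3) (cx {1,2,4} x 4)} =
        {x \<in> space ?M. ?P (x(1 := x 1 + ?c x))}"
    by (auto simp: cx_def r_nice)
  have "emeasure ?M {x \<in> space ?M. ?P (x(1 := x 1 + ?c x))} = emeasure ?M {x \<in> space ?M. ?P x}"
    apply (rule shear[of "{1,2,4::4}" 1 ?c ?P])
    subgoal by simp
    subgoal by simp
    subgoal by simp
    subgoal unfolding nice_def by measurable
    subgoal unfolding nice_def by simp measurable
    done
  also have "\<dots> = ennreal (11/3)" by (rule vol124)
  finally have em: "emeasure ?M {x \<in> space ?M. ?P (x(1 := x 1 + ?c x))} = ennreal (11/3)" .
  show ?thesis unfolding seteq measure_def em by simp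
qed

lemma RS12: "measure (PiM {1,2::4} (\<lambda>_. lborel))
  {x \<in> space (PiM {1,2::4} (\<lambda>_. lborel)). r (cx {1,2} x 1) (cx {1,2} x 2) (cx {1,2} x 3) (cx {1,2} x 4)} = 21/2"
proof -
  let ?M = "PiM {1,2::4} (\<lambda>_. lborel :: real measure)"
  let ?P = "\<lambda>x::4\<Rightarrow>real. nice (x 1) (x 2) 0 0"
  let ?c = "\<lambda>x::4\<Rightarrow>real. x 2 + 19 * 0 + 19 * 0 - 20"
  have seteq: "{x \<in> space ?M. r (cx {1,2} x 1) (cx {1,2} x 2) (cx {1,2} x 3) (cx {1,2} x 4)} =
        {x \<in> space ?M. ?P (x(1 := x 1 + ?c x))}"
    by (auto simp: cx_def r_nice)
  have "emeasure ?M {x \<in> space ?M. ?P (x(1 := x 1 + ?c x))} = emeasure ?M {x \<in> space ?M. ?P x}"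
    apply (rule shear[of "{1,2::4}" 1 ?c ?P])
    subgoal by simp
    subgoal by simp
    subgoal by simp
    subgoal unfolding nice_def by measurable
    subgoal unfolding nice_def by simp measurable
    done
  also have "\<dots> = ennreal (21/2)" by (rule vol12)
  finally have em: "emeasure ?M {x \<in> space ?M. ?P (x(1 := x 1 + ?c x))} = ennreal (21/2)" .
  show ?thesis unfolding seteq measure_def em by simp
qed



lemma delta:
  "measure (PiM J (\<lambda>_. lborel)) {x \<in> space (PiM J (\<lambda>_. lborel)). r (cx J x 1) (cx J x 2) (cx J x 3) (cx J x 4)} =
   (if J = {1,2} then 21/2 else 0) + (if J = {1,2,3} then 11/3 else 0) +
   (if J = {1,2,4} then 11/3 else 0) + (if J = {1,2,3,4} then 23/24 else 0)"
proof (cases "1 \<in> J \<and> 2 \<in> J")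
  case False
  have "\<not> r (cx J x 1) (cx J x 2) (cx J x 3) (cx J x 4)" for x
  proof
    assume "r (cx J x 1) (cx J x 2) (cx J x 3) (cx J x 4)"
    then have "0 < cx J x 1" "0 < cx J x 2" using r_pos by blast+
    then show False using False unfolding cx_def by (auto split: if_splits)
  qed
  then have e: "{x \<in> space (PiM J (\<lambda>_. lborel)). r (cx J x 1) (cx J x 2) (cx J x 3) (cx J x 4)} = {}" by simp
  have n: "J \<noteq> {1,2}" "J \<noteq> {1,2,3}" "J \<noteq> {1,2,4}" "J \<noteq> {1,2,3,4}" using False by auto
  show ?thesis unfolding e using n by simp
next
  case True
  have ex: "j = 1 \<or> j = 2 \<or> j = 3 \<or> j = 4" for j :: 4 using exhaust_4 by blast
  show ?thesis
  proof (cases "3 \<in> J")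
    case c3: True
    show ?thesis
    proof (cases "4 \<in> J")
      case c4: True
      have "J = {1,2,3,4}"
      proof (rule set_eqI)
        fix j show "j \<in> J \<longleftrightarrow> j \<in> {1,2,3,4}" using ex[of j] True c3 c4 by auto
      qed
      then show ?thesis using RS4 by simp
    next
      case c4: False
      have "J = {1,2,3}"
      proof (rule set_eqI)
        fix j show "j \<in> J \<longleftrightarrow> j \<in> {1,2,3}" using ex[of j] True c3 c4 by auto
      qed
      then show ?thesis using RS123 by simp
    qed
  next
    case c3: False
    show ?thesis
    proof (cases "4 \<in> J")
      case c4: True
      have "J = {1,2,4}"
      proof (rule set_eqI)
        fix j show "j \<in> J \<longleftrightarrow> j \<in> {1,2,4}" using ex[of j] True c3 c4 by auto
      qed
      then show ?thesis using RS124 by simp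
    next
      case c4: False
      have "J = {1,2}"
      proof (rule set_eqI)
        fix j show "j \<in> J \<longleftrightarrow> j \<in> {1,2}" using ex[of j] True c3 c4 by auto
      qed
      then show ?thesis using RS12 by simp
    qed
  qed
qed


theorem mainTheorem17:
  shows "newton_polyhedron S_F \<subset> newton_polyhedron (insert W_pt S_F) \<and>
         newton_number (newton_polyhedron S_F) = newton_number (newton_polyhedron (insert W_pt S_F))"
proof
  show "newton_polyhedron S_F \<subset> newton_polyhedron (insert W_pt S_F)" by (rule proper)
  let ?co = "\<lambda>J::4 set. (-1) ^ (CARD(4) - card J) * fact (card J) :: real"
  have "newton_number (newton_polyhedron S_F) - newton_number (newton_polyhedron (insert W_pt S_F)) =
        (\<Sum>J\<in>{J. J \<noteq> {}}. ?co J * (coord_vol (newton_polyhedron S_F) J - coord_vol (newton_polyhedron (insert W_pt S_F)) J))"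
    unfolding newton_number_def by (simp add: right_diff_distrib sum_subtractf)
  also have "\<dots> = (\<Sum>J\<in>{J. J \<noteq> {}}. (if J = {1,2} then ?co J * (21/2) else 0) + (if J = {1,2,3} then ?co J * (11/3) else 0) +
                   (if J = {1,2,4} then ?co J * (11/3) else 0) + (if J = {1,2,3,4} then ?co J * (23/24) else 0))"
    unfolding vol_diff delta by (intro sum.cong refl) (simp add: distrib_left)
  also have "\<dots> = 0"
    by (simp add: sum.distrib)
  finally show "newton_number (newton_polyhedron S_F) = newton_number (newton_polyhedron (insert W_pt S_F))"
    by simp
qed


end
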